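(* Let $0<\eta<1$, $M>1$ and $0<\delta<0.01$. For every $g\in H$, $\Delta\in X$ and $t>0$, $$\int_{-1}^{1}\widehat{\alpha}_{\eta,M}(a_tu_rg;\Delta)^{1+\delta}\,dr\le 80\delta^{-1}e^{\delta t}\widehat{\alpha}_{\eta,M}(g;\Delta)^{1+\delta}+80\delta^{-1}\alpha(g\Delta)^{0.9}+\tfrac12 e^{6t}.$$
   Context: $\|\cdot\|$ is the supremum norm on $\mathbb{R}^3$. $Q_0(v)=v_2^2-2v_1v_3$, $G=\mathrm{SL}_3(\mathbb{R})$, $H=\{g\in G:Q_0(gv)=Q_0(v)\ \forall v\}$, $X$ the space of unimodular lattices in $\mathbb{R}^3$; $g^*=(g^T)^{-1}$, $\Delta^*$ the dual lattice. $a_t=\mathrm{diag}(e^t,1,e^{-t})$, $u_r=\begin{pmatrix}1&r&r^2/2\\0&1&r\\0&0&1\end{pmatrix}$. $\alpha(\Delta)=\sup\{\|v\|^{-1}:v\in(\Delta\cup\Delta^* )\setminus\{0\}\}$. $\mathcal{H}_{\eta,M}=\{v:|Q_0(v)|<\eta\|v\|^{-50M}\}$. $\widehat{\alpha}_{1,\eta,M}(g;\Delta)=\sup\{\|gv\|^{-1}:v\in\Delta\setminus(\mathcal{H}_{\eta,M}\cup\{0\})\}$, $\widehat{\alpha}_{2,\eta,M}(g;\Delta)=\widehat{\alpha}_{1,\eta,M}(g^*;\Delta^* )$, $\widehat{\alpha}_{\eta,M}=\max(\widehat{\alpha}_{1,\eta,M},\widehat{\alpha}_{2,\eta,M})$.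 *)

theory Defs
  imports "HOL-Analysis.Analysis"
begin

type_synonym vec3 = "real^3"
type_synonym mat3 = "real^3^3"

text \<open>Indices of the type 3 are written 1, 2, 3 (where 3 = 0 in the numeral type).\<close>

definition Q0 :: "vec3 \<Rightarrow> real" where
  "Q0 v = (v$2)^2 - 2 * (v$1) * (v$3)"

definition SL3 :: "mat3 set" where
  "SL3 = {g. det g = 1}"

definition Hgrp :: "mat3 set" where
  "Hgrp = {g \<in> SL3. \<forall>v. Q0 (g *v v) = Q0 v}"

definition dualmat :: "mat3 \<Rightarrow> mat3" where
  "dualmat g = matrix_inv (transpose g)"

definition int_vecs :: "vec3 set" where
  "int_vecs = {v. \<forall>i. v$i \<in> \<int>}"

definition unimod_lattice :: "vec3 set \<Rightarrow> bool" where
  "unimod_lattice L \<longleftrightarrow> (\<exists>A\<in>SL3. L = (\<lambda>z. A *v z) ` int_vecs)"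

definition dual_lattice :: "vec3 set \<Rightarrow> vec3 set" where
  "dual_lattice L = {w. \<forall>v\<in>L. w \<bullet> v \<in> \<int>}"

definition act :: "mat3 \<Rightarrow> vec3 set \<Rightarrow> vec3 set" where
  "act g L = (\<lambda>v. g *v v) ` L"

definition a_mat :: "real \<Rightarrow> mat3" where
  "a_mat t = (\<chi> i j. if i = j then (if i = 1 then exp t else if i = 2 then 1 else exp (- t)) else 0)"

definition u_mat :: "real \<Rightarrow> mat3" where
  "u_mat r = (\<chi> i j. if i = j then 1
                      else if i = 1 \<and> j = 2 then r
                      else if i = 1 \<and> j = 3 then r^2 / 2
                      else if i = 2 \<and> j = 3 then r
                      else 0)"

definition alpha :: "vec3 set \<Rightarrow> real" where
  "alpha L = Sup {1 / infnorm v | v. v \<in> (L \<union> dual_lattice L) - {0}}"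

definition Hset :: "real \<Rightarrow> real \<Rightarrow> vec3 set" where
  "Hset \<eta> M = {v. \<bar>Q0 v\<bar> < \<eta> * infnorm v powr (- 50 * M)}"

definition alpha_hat1 :: "real \<Rightarrow> real \<Rightarrow> mat3 \<Rightarrow> vec3 set \<Rightarrow> real" where
  "alpha_hat1 \<eta> M g L = Sup {1 / infnorm (g *v v) | v. v \<in> L - (Hset \<eta> M \<union> {0})}"

definition alpha_hat2 :: "real \<Rightarrow> real \<Rightarrow> mat3 \<Rightarrow> vec3 set \<Rightarrow> real" where
  "alpha_hat2 \<eta> M g L = alpha_hat1 \<eta> M (dualmat g) (dual_lattice L)"

definition alpha_hat :: "real \<Rightarrow> real \<Rightarrow> mat3 \<Rightarrow> vec3 set \<Rightarrow> real" where
  "alpha_hat \<eta> M g L = max (alpha_hat1 \<eta> M g L) (alpha_hat2 \<eta> M g L)"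

end

theory Submission imports Defs begin

lemma minus_diff_eq_pm: "- (d::real) - 1 = -(1+d)" by simp

lemma ftc_bound:
  fixes a d r0 :: real
  assumes a: "a > 0" and d: "d > 0"
  shows "(\<integral>\<^sup>+ r. ennreal ((\<bar>r - r0\<bar> + a) powr (-(1+d))) * indicator {-1..1} r \<partial>lborel)
         \<le> ennreal (2 * a powr (-d) / d)"
proof -
  define L where "L r = -(a powr (-d) - (r0 - r + a) powr (-d)) / d" for r
  define R where "R r = (a powr (-d) - (r - r0 + a) powr (-d)) / d" for r
  define P where "P r = (if r \<le> r0 then L r else R r)" for r
  define f where "f r = (\<bar>r - r0\<bar> + a) powr (-(1+d))" for r
  have dL: "(L has_real_derivative f r) (at r)" if "r < r0" for r
  proof -
    have pos: "r0 - r + a > 0" using that a by simp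
    have "(L has_real_derivative (- (- ((- d) * (r0 - r + a) powr (- d - 1) * (- 1))) / d)) (at r)"
      unfolding L_def using pos by (auto intro!: derivative_eq_intros)
    moreover have "(- (- ((- d) * (r0 - r + a) powr (- d - 1) * (- 1))) / d) = f r"
      using d that unfolding f_def minus_diff_eq_pm by (simp add: abs_if field_simps)
    ultimately show ?thesis by simp
  qed
  have dR: "(R has_real_derivative f r) (at r)" if "r > r0" for r
  proof -
    have pos: "r - r0 + a > 0" using that a by simp
    have "(R has_real_derivative ((- ((- d) * (r - r0 + a) powr (- d - 1) * 1)) / d)) (at r)"
      unfolding R_def using pos by (auto intro!: derivative_eq_intros)
    moreover have "((- ((- d) * (r - r0 + a) powr (- d - 1) * 1)) / d) = f r"
      using d that unfolding f_def minus_diff_eq_pm by (simp add: abs_if field_simps)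
    ultimately show ?thesis by simp
  qed
  have dP: "(P has_vector_derivative f r) (at r)" if "r \<in> {-1<..<1} - {r0}" for r
  proof (cases "r < r0")
    case True
    have "(P has_real_derivative f r) (at r)"
      by (rule has_field_derivative_transform_within_open[OF dL[OF True], of "{..<r0}"])
         (use True in \<open>auto simp: P_def\<close>)
    then show ?thesis by (simp add: has_real_derivative_iff_has_vector_derivative)
  next
    case False
    then have "r > r0" using that by auto
    have "(P has_real_derivative f r) (at r)"
      by (rule has_field_derivative_transform_within_open[OF dR[OF \<open>r > r0\<close>], of "{r0<..}"])
         (use \<open>r > r0\<close> in \<open>auto simp: P_def\<close>)
    then show ?thesis by (simp add: has_real_derivative_iff_has_vector_derivative)
  qed
  have cP: "continuous_on {-1..1} P"
    unfolding P_def
  proof (rule continuous_on_cases_1)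
    show "continuous_on {t \<in> {- 1..1}. t \<le> r0} L"
      unfolding L_def using a d by (intro continuous_intros) auto
    show "continuous_on {t \<in> {- 1..1}. r0 \<le> t} R"
      unfolding R_def using a d by (intro continuous_intros) auto
    show "r0 \<in> {- 1..1} \<Longrightarrow> L r0 = R r0" by (simp add: L_def R_def)
  qed
  have int: "(f has_integral (P 1 - P (-1))) {-1..1}"
    by (rule fundamental_theorem_of_calculus_interior_strong[of "{r0}"]) (use dP cP in auto)
  have fnn: "\<And>r. 0 \<le> f r" unfolding f_def by simp
  have eq: "(\<integral>\<^sup>+ r. ennreal (f r) * indicator {-1..1} r \<partial>lborel) = ennreal (P 1 - P (-1))"
  proof -
    have "(\<integral>\<^sup>+ r. ennreal (f r) * indicator {-1..1} r \<partial>lborel)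
        = (\<integral>\<^sup>+ r. ennreal (f r * indicator {-1..1} r) \<partial>lborel)"
      by (intro nn_integral_cong) (simp split: split_indicator)
    also have "\<dots> = ennreal (P 1 - P (-1))"
      using nn_integral_has_integral_lebesgue[OF _ int] fnn by (simp add: mult.commute)
    finally show ?thesis .
  qed
  have bnd: "\<bar>P r\<bar> \<le> a powr (-d) / d" for r
  proof -
    have m: "x powr (-d) \<le> a powr (-d)" if "x \<ge> a" for x
      using that a d by (intro powr_mono2') auto
    have z: "0 \<le> x powr (-d)" for x :: real by simp
    show ?thesis
    proof (cases "r \<le> r0")
      case True
      have "(r0 - r + a) powr (-d) \<le> a powr (-d)" using m True by simp
      then show ?thesis using True d z[of "r0 - r + a"] unfolding P_def L_def
        by (simp add: abs_if divide_simps)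
    next
      case False
      have "(r - r0 + a) powr (-d) \<le> a powr (-d)" using m False by simp
      then show ?thesis using False d z[of "r - r0 + a"] unfolding P_def R_def
        by (simp add: abs_if divide_simps)
    qed
  qed
  have "P 1 - P (-1) \<le> 2 * a powr (-d) / d"
    using bnd[of 1] bnd[of "-1"] by (simp add: abs_le_iff)
  then show ?thesis unfolding f_def[symmetric] eq
    by (simp add: ennreal_leI)
qed


lemma h_apply:
  "(a_mat t ** u_mat r) *v u = vector [exp t * (u$1 + r*u$2 + r^2/2*u$3), u$2 + r*u$3, exp (-t) * u$3]"
  by (simp add: vec_eq_iff forall_3 vector_def matrix_vector_mult_def matrix_matrix_mult_def sum_3 a_mat_def u_mat_def algebra_simps)

lemma infnorm3: "infnorm (x::real^3) = max \<bar>x$1\<bar> (max \<bar>x$2\<bar> \<bar>x$3\<bar>)"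
proof -
  have "{\<bar>x$i\<bar> |i. i\<in>(UNIV::3 set)} = {\<bar>x$1\<bar>, \<bar>x$2\<bar>, \<bar>x$3\<bar>}"
    unfolding UNIV_3 by auto
  then show ?thesis unfolding infnorm_cart by (simp add: cSup_insert sup_max)
qed

lemma powr_root_le:
  fixes x y :: real and n :: nat
  assumes "x > 0" "y > 0" "n > 0" "x \<le> y ^ n"
  shows "x powr (1 / real n) \<le> y"
proof (rule ccontr)
  assume "\<not> ?thesis"
  then have "y < x powr (1 / real n)" by simp
  then have "y ^ n < (x powr (1 / real n)) ^ n"
    using assms by (intro power_strict_mono) auto
  also have "\<dots> = x" using assms
    by (simp add: powr_realpow[symmetric] powr_powr)
  finally show False using assms by simp
qed

lemma eight_powr: "0 \<le> d \<Longrightarrow> d \<le> 1/6 \<Longrightarrow> (8::real) powr d \<le> 3/2"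
proof -
  assume "0 \<le> d" "d \<le> 1/6"
  then have "(8::real) powr d \<le> 8 powr (1 / real (6::nat))"
    by (intro powr_mono) auto
  also have "\<dots> \<le> 3/2" by (rule powr_root_le) (auto simp: power_divide)
  finally show ?thesis .
qed

lemma sv_bound:
  fixes u :: "real^3" and t d :: real
  assumes u: "u \<noteq> 0" and t: "t > 0" and d: "0 < d" "d < 0.01"
  shows "\<exists>\<psi>. \<psi> \<in> borel_measurable borel \<and> (\<forall>r. 0 \<le> \<psi> r) \<and>
     (\<forall>r\<in>{-1..1}. (infnorm u / infnorm ((a_mat t ** u_mat r) *v u)) powr (1+d) \<le> \<psi> r) \<and>
     (\<integral>\<^sup>+ r. ennreal (\<psi> r) * indicator {-1..1} r \<partial>lborel) \<le> ennreal (25 * exp (d*t) / d)"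
proof -
  define n where "n = infnorm u"
  have n: "n > 0" using u unfolding n_def by (simp add: infnorm_pos_lt)
  define r0 where "r0 = - (u$2) / (u$3)"
  define a where "a = exp (-t)"
  have a: "a > 0" "a \<le> 1" using t unfolding a_def by auto
  define p where "p = 1 + d"
  have p: "p > 1" using d unfolding p_def by simp
  define \<psi> where "\<psi> r = 8 powr p * (\<bar>r - r0\<bar> + a) powr (-p) + 4 powr p" for r
  have meas: "\<psi> \<in> borel_measurable borel"
    unfolding \<psi>_def by measurable
  have nn: "\<forall>r. 0 \<le> \<psi> r" unfolding \<psi>_def by simp
  have pw: "(infnorm u / infnorm ((a_mat t ** u_mat r) *v u)) powr p \<le> \<psi> r"
    if r: "r \<in> {-1..1}" for r
  proof -
    define F where "F = infnorm ((a_mat t ** u_mat r) *v u)"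
    have c1: "\<bar>exp t * (u$1 + r*u$2 + r^2/2*u$3)\<bar> \<le> F"
      and c2: "\<bar>u$2 + r*u$3\<bar> \<le> F" and c3: "\<bar>exp (-t) * u$3\<bar> \<le> F"
      unfolding F_def h_apply infnorm3 by auto
    have nmax: "n = max \<bar>u$1\<bar> (max \<bar>u$2\<bar> \<bar>u$3\<bar>)" unfolding n_def infnorm3 ..
    have r1: "\<bar>r\<bar> \<le> 1" using r by auto
    show ?thesis
    proof (cases "\<bar>u$3\<bar> \<ge> n/4")
      case True
      then have u3: "u$3 \<noteq> 0" using n by auto
      have "u$2 + r*u$3 = u$3 * (r - r0)" unfolding r0_def using u3 by (simp add: field_simps)
      then have "\<bar>u$3\<bar> * \<bar>r - r0\<bar> \<le> F" using c2 by (simp add: abs_mult)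
      moreover have "a * \<bar>u$3\<bar> \<le> F" using c3 unfolding a_def by (simp add: abs_mult)
      ultimately have "\<bar>u$3\<bar> * (\<bar>r - r0\<bar> + a) \<le> 2 * F" by (simp add: algebra_simps)
      then have "n/4 * (\<bar>r - r0\<bar> + a) \<le> 2 * F"
        using True a by (smt (verit) abs_ge_zero mult_right_mono)
      moreover have pos: "\<bar>r - r0\<bar> + a > 0" using a by (simp add: add_nonneg_pos)
      moreover have "n/4 * (\<bar>r - r0\<bar> + a) > 0" using n pos by simp
      ultimately have Fpos: "F > 0" by linarith
      have q: "n / F \<le> 8 / (\<bar>r - r0\<bar> + a)"
        using \<open>n/4 * (\<bar>r - r0\<bar> + a) \<le> 2 * F\<close> Fpos pos by (simp add: divide_simps)
      have "(n / F) powr p \<le> (8 / (\<bar>r - r0\<bar> + a)) powr p"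
        using q n Fpos p by (intro powr_mono2) auto
      also have "\<dots> = 8 powr p * (\<bar>r - r0\<bar> + a) powr (-p)"
        using pos by (simp add: powr_divide powr_minus_divide)
      finally show ?thesis unfolding \<psi>_def F_def[symmetric] n_def[symmetric]
        by (smt (verit) powr_ge_zero)
    next
      case False
      have "4 * F \<ge> n"
      proof (cases "\<bar>u$2\<bar> \<ge> n/2")
        case True
        have "\<bar>r*u$3\<bar> \<le> \<bar>u$3\<bar>" using r1 by (simp add: abs_mult mult_left_le_one_le)
        then show ?thesis using c2 True False by linarith
      next
        case False2: False
        have u1: "\<bar>u$1\<bar> = n" using nmax False False2 by (auto simp: max_def split: if_splits)
        have "\<bar>r*u$2\<bar> \<le> \<bar>u$2\<bar>" using r1 by (simp add: abs_mult mult_left_le_one_le)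
        moreover have "\<bar>r^2/2*u$3\<bar> \<le> \<bar>u$3\<bar>/2"
          using r1 by (simp add: abs_mult power_le_one abs_square_le_1 mult_left_le_one_le)
        ultimately have "\<bar>u$1 + r*u$2 + r^2/2*u$3\<bar> \<ge> 3*n/8"
          using u1 False False2 by linarith
        moreover have "\<bar>exp t * (u$1 + r*u$2 + r^2/2*u$3)\<bar> \<ge> \<bar>u$1 + r*u$2 + r^2/2*u$3\<bar>"
          using t by (simp add: abs_mult mult_le_cancel_right1)
        ultimately show ?thesis using c1 n by linarith
      qed
      then have Fpos: "F > 0" and q: "n / F \<le> 4" using n by (auto simp: field_simps)
      have "(n / F) powr p \<le> 4 powr p"
        using q n Fpos p by (intro powr_mono2) auto
      then show ?thesis unfolding \<psi>_def F_def[symmetric] n_def[symmetric]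
        by (smt (verit) powr_ge_zero mult_nonneg_nonneg)
    qed
  qed
  have int: "(\<integral>\<^sup>+ r. ennreal (\<psi> r) * indicator {-1..1} r \<partial>lborel) \<le> ennreal (25 * exp (d*t) / d)"
  proof -
    have "(\<integral>\<^sup>+ r. ennreal (\<psi> r) * indicator {-1..1} r \<partial>lborel)
      = (\<integral>\<^sup>+ r. ennreal (8 powr p) * (ennreal ((\<bar>r - r0\<bar> + a) powr (-p)) * indicator {-1..1} r)
             + ennreal (4 powr p) * indicator {-1..1} r \<partial>lborel)"
      by (intro nn_integral_cong) (auto simp: \<psi>_def ennreal_plus ennreal_mult split: split_indicator)
    also have "\<dots> = ennreal (8 powr p) * (\<integral>\<^sup>+ r. ennreal ((\<bar>r - r0\<bar> + a) powr (-p)) * indicator {-1..1} r \<partial>lborel)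
             + ennreal (4 powr p) * 2"
      by (subst nn_integral_add) (auto simp: nn_integral_cmult)
    also have "\<dots> \<le> ennreal (8 powr p) * ennreal (2 * a powr (-d) / d) + ennreal (4 powr p) * ennreal 2"
      using ftc_bound[OF a(1) d(1), of r0] unfolding p_def
      by (intro add_mono mult_left_mono) auto
    also have "\<dots> = ennreal (8 powr p * (2 * a powr (-d) / d) + 4 powr p * 2)"
    proof -
      have e1: "ennreal (8 powr p) * ennreal (2 * a powr (-d) / d) = ennreal (8 powr p * (2 * a powr (-d) / d))"
        by (rule ennreal_mult[symmetric]) (use d in auto)
      have e2: "ennreal (4 powr p) * ennreal 2 = ennreal (4 powr p * 2)"
        by (rule ennreal_mult[symmetric]) auto
      show ?thesis unfolding e1 e2 by (rule ennreal_plus[symmetric]) (use d in auto)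
    qed
    also have "\<dots> \<le> ennreal (25 * exp (d*t) / d)"
    proof (intro ennreal_leI)
      have e: "a powr (-d) = exp (d*t)" unfolding a_def by (simp add: powr_def)
      have e1: "exp (d*t) \<ge> 1" using d t by simp
      have "8 powr p = 8 * 8 powr d" unfolding p_def by (simp add: powr_add)
      also have "\<dots> \<le> 12" using eight_powr[of d] d by simp
      finally have h8: "8 powr p \<le> 12" .
      have "4 powr p \<le> 4 powr 2" unfolding p_def using d by (intro powr_mono) auto
      then have h4: "4 powr p \<le> 16" by simp
      have A0: "8 powr p * (2 * exp (d*t) / d) \<le> 12 * (2 * exp (d*t) / d)"
        using h8 d e1 by (intro mult_right_mono) auto
      have A: "8 powr p * (2 * exp (d*t) / d) \<le> 24 * exp (d*t) / d"
        using A0 by simp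
      have B: "4 powr p * 2 \<le> 32" using h4 by simp
      have C: "32 \<le> exp (d*t) / d"
      proof -
        have "d * 32 \<le> 1" using d by simp
        then have "d * 32 \<le> exp (d*t)" using e1 by linarith
        then show ?thesis using d by (simp add: field_simps)
      qed
      have S: "25 * exp (d*t) / d = 24 * exp (d*t) / d + exp (d*t) / d"
        by (simp add: add_divide_distrib[symmetric])
      show "8 powr p * (2 * a powr (-d) / d) + 4 powr p * 2 \<le> 25 * exp (d*t) / d"
        unfolding e using A B C S by linarith
    qed
    finally show ?thesis .
  qed
  show ?thesis using meas nn pw int unfolding p_def by blast
qed


definition lat :: "mat3 \<Rightarrow> vec3 set" where "lat N = (\<lambda>z. N *v z) ` int_vecs"

lemma inv_ok:
  fixes N :: "real^'n^'n"
  assumes "det N \<noteq> 0"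
  shows "N ** matrix_inv N = mat 1" "matrix_inv N ** N = mat 1"
proof -
  have "invertible N" using assms by (simp add: invertible_det_nz)
  then have "\<exists>A'. N ** A' = mat 1 \<and> A' ** N = mat 1" unfolding invertible_def by auto
  then have "N ** matrix_inv N = mat 1 \<and> matrix_inv N ** N = mat 1"
    unfolding matrix_inv_def by (rule someI_ex)
  then show "N ** matrix_inv N = mat 1" "matrix_inv N ** N = mat 1" by auto
qed

lemma inv_unique:
  fixes N B :: "real^'n^'n"
  assumes "det N \<noteq> 0" "N ** B = mat 1"
  shows "matrix_inv N = B"
proof -
  have "matrix_inv N = matrix_inv N ** (N ** B)" using assms by (simp add: matrix_mul_rid)
  also have "\<dots> = (matrix_inv N ** N) ** B" by (simp add: matrix_mul_assoc)
  also have "\<dots> = B" using inv_ok[OF assms(1)] by (simp add: matrix_mul_lid)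
  finally show ?thesis .
qed

lemma infnorm_le3:
  fixes x :: "real^3"
  assumes "\<And>i. \<bar>x$i\<bar> \<le> c"
  shows "infnorm x \<le> c"
  using assms unfolding infnorm3 by simp

lemma bounded_mat: "\<exists>C>0. \<forall>v. infnorm ((P::mat3) *v v) \<le> C * infnorm v"
proof -
  define C where "C = 1 + (\<Sum>i\<in>UNIV. \<Sum>j\<in>UNIV. \<bar>P$i$j\<bar>)"
  have C0: "C > 0" unfolding C_def by (simp add: add_pos_nonneg sum_nonneg)
  have "infnorm (P *v v) \<le> C * infnorm v" for v
  proof (rule infnorm_le3)
    fix i
    have "\<bar>(P *v v)$i\<bar> = \<bar>\<Sum>j\<in>UNIV. P$i$j * v$j\<bar>" by (simp add: matrix_vector_mult_def)
    also have "\<dots> \<le> (\<Sum>j\<in>UNIV. \<bar>P$i$j\<bar> * infnorm v)"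
      by (rule order_trans[OF sum_abs]) (auto intro!: sum_mono simp: abs_mult mult_left_mono component_le_infnorm_cart)
    also have "\<dots> = (\<Sum>j\<in>UNIV. \<bar>P$i$j\<bar>) * infnorm v" by (simp add: sum_distrib_right)
    also have "\<dots> \<le> (\<Sum>i\<in>UNIV. \<Sum>j\<in>UNIV. \<bar>P$i$j\<bar>) * infnorm v"
      by (intro mult_right_mono member_le_sum) (auto simp: sum_nonneg infnorm_pos_le)
    also have "\<dots> \<le> C * infnorm v" unfolding C_def by (simp add: infnorm_pos_le distrib_right)
    finally show "\<bar>(P *v v)$i\<bar> \<le> C * infnorm v" .
  qed
  then show ?thesis using C0 by blast
qed

lemma int_vec_ge1:
  assumes "z \<in> int_vecs" "z \<noteq> 0"
  shows "infnorm z \<ge> 1"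
proof -
  obtain i where "z$i \<noteq> 0" using assms(2) by (auto simp: vec_eq_iff)
  moreover have "z$i \<in> \<int>" using assms(1) unfolding int_vecs_def by auto
  ultimately have "\<bar>z$i\<bar> \<ge> 1" by (auto elim!: Ints_cases)
  then show ?thesis using component_le_infnorm_cart[of z i] by linarith
qed

lemma lat_lower:
  assumes "det N \<noteq> 0"
  shows "\<exists>c>0. \<forall>x\<in>lat N. x \<noteq> 0 \<longrightarrow> infnorm x \<ge> c"
proof -
  obtain C where C: "C > 0" "\<And>v. infnorm (matrix_inv N *v v) \<le> C * infnorm v"
    using bounded_mat by blast
  have "infnorm x \<ge> 1/C" if xL: "x \<in> lat N" and x0: "x \<noteq> 0" for x
  proof -
    obtain z where z: "z \<in> int_vecs" "x = N *v z" using xL unfolding lat_def by auto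
    have zx: "matrix_inv N *v x = z"
      using z inv_ok[OF assms] by (simp add: matrix_vector_mul_assoc)
    then have "z \<noteq> 0" using x0 z by auto
    then have "1 \<le> infnorm z" using int_vec_ge1 z by auto
    also have "\<dots> \<le> C * infnorm x" using C(2)[of x] zx by simp
    finally show ?thesis using C by (simp add: field_simps)
  qed
  then show ?thesis using C by (intro exI[of _ "1/C"]) auto
qed

lemma Ints_inner:
  assumes "a \<in> int_vecs" "b \<in> int_vecs"
  shows "inner a (b::vec3) \<in> \<int>"
  using assms unfolding int_vecs_def by (simp add: inner_vec_def sum_3)

lemma axis_int: "axis i 1 \<in> int_vecs"
  unfolding int_vecs_def by (simp add: axis_def)

lemma dual_char:
  assumes "w \<in> dual_lattice (lat N)"
  shows "transpose N *v w \<in> int_vecs"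
proof -
  have "(transpose N *v w)$i \<in> \<int>" for i
  proof -
    have "N *v axis i 1 \<in> lat N" unfolding lat_def using axis_int by auto
    then have "inner w (N *v axis i 1) \<in> \<int>" using assms unfolding dual_lattice_def by auto
    moreover have "inner w (N *v axis i 1) = (transpose N *v w)$i"
      by (simp add: dot_lmul_matrix[symmetric] inner_axis)
    ultimately show ?thesis by simp
  qed
  then show ?thesis unfolding int_vecs_def by auto
qed

lemma dual_lower:
  assumes "det N \<noteq> 0"
  shows "\<exists>c>0. \<forall>x\<in>dual_lattice (lat N). x \<noteq> 0 \<longrightarrow> infnorm x \<ge> c"
proof -
  obtain C where C: "C > 0" "\<And>v. infnorm (transpose N *v v) \<le> C * infnorm v"
    using bounded_mat by blast
  have dt: "det (transpose N) \<noteq> 0" using assms by simp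
  have "infnorm x \<ge> 1/C" if "x \<in> dual_lattice (lat N)" "x \<noteq> 0" for x
  proof -
    have m: "transpose N *v x \<in> int_vecs" using dual_char that by blast
    have "matrix_inv (transpose N) *v (transpose N *v x) = x"
      using inv_ok[OF dt] by (simp add: matrix_vector_mul_assoc del: transpose_matrix_vector)
    then have "transpose N *v x \<noteq> 0" using that by auto
    then have "1 \<le> infnorm (transpose N *v x)" using int_vec_ge1 m by auto
    also have "\<dots> \<le> C * infnorm x" using C(2)[of x] by simp
    finally show ?thesis using C by (simp add: field_simps)
  qed
  then show ?thesis using C by (intro exI[of _ "1/C"]) auto
qed

lemma inner_dualmat:
  assumes "det g \<noteq> 0"
  shows "inner (dualmat g *v w) (g *v x) = inner w (x::vec3)"
proof -
  have dt: "det (transpose g) \<noteq> 0" using assms by simp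
  have "inner (dualmat g *v w) (g *v x) = inner ((dualmat g *v w) v* g) x"
    by (simp add: dot_lmul_matrix)
  also have "(dualmat g *v w) v* g = transpose g *v (dualmat g *v w)" by simp
  also have "\<dots> = w" unfolding dualmat_def using inv_ok[OF dt]
    by (simp add: matrix_vector_mul_assoc)
  finally show ?thesis .
qed

lemma cross_int: "a \<in> int_vecs \<Longrightarrow> b \<in> int_vecs \<Longrightarrow> cross3 a b \<in> int_vecs"
  unfolding int_vecs_def by (simp add: cross3_def forall_3 vector_def)

lemma cross_dual:
  assumes "det N = 1" "x \<in> lat N" "y \<in> lat N"
  shows "cross3 x y \<in> dual_lattice (lat N)"
proof -
  obtain a b where ab: "a \<in> int_vecs" "b \<in> int_vecs" "x = N *v a" "y = N *v b"
    using assms unfolding lat_def by auto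
  have T: "transpose N *v (cross3 x y) = cross3 a b"
    using cross_matrix_mult[of N a b] assms(1) ab by simp
  show ?thesis unfolding dual_lattice_def
  proof safe
    fix v assume "v \<in> lat N"
    then obtain c where c: "c \<in> int_vecs" "v = N *v c" unfolding lat_def by auto
    have "inner (cross3 x y) v = inner ((cross3 x y) v* N) c" using c by (simp add: dot_lmul_matrix)
    also have "\<dots> = inner (cross3 a b) c" using T by simp
    finally show "inner (cross3 x y) v \<in> \<int>" using Ints_inner cross_int ab c by simp
  qed
qed

lemma cross_dual2:
  assumes "det N = 1" "x \<in> dual_lattice (lat N)" "y \<in> dual_lattice (lat N)"
  shows "cross3 x y \<in> lat N"
proof -
  have m: "transpose N *v x \<in> int_vecs" "transpose N *v y \<in> int_vecs"
    using dual_char assms by blast+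
  have "transpose (transpose N) *v (cross3 (transpose N *v x) (transpose N *v y)) = det (transpose N) *\<^sub>R (cross3 x y)"
    by (rule cross_matrix_mult)
  then have "N *v (cross3 (transpose N *v x) (transpose N *v y)) = cross3 x y" using assms(1) by simp
  then show ?thesis unfolding lat_def using cross_int[OF m] by (metis image_eqI)
qed

lemma cross_norm: "infnorm (cross3 x y) \<le> 2 * infnorm x * infnorm (y::vec3)"
proof (rule infnorm_le3)
  fix i
  have b: "\<bar>x$j * y$k\<bar> \<le> infnorm x * infnorm y" for j k
    unfolding abs_mult by (intro mult_mono component_le_infnorm_cart) (auto simp: infnorm_pos_le)
  show "\<bar>(cross3 x y)$i\<bar> \<le> 2 * infnorm x * infnorm y"
    using exhaust_3[of i] b[of 2 3] b[of 3 2] b[of 3 1] b[of 1 3] b[of 1 2] b[of 2 1]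
    by (auto simp: cross3_def vector_def)
qed

lemma cross_zero_par:
  assumes "cross3 x u = 0" "u \<noteq> 0"
  shows "\<exists>l. x = l *\<^sub>R u"
proof -
  have "collinear {0, u, x}" using assms(1) cross_eq_0[of x u] by (simp add: insert_commute)
  then show ?thesis using assms(2) collinear_lemma[of u x] by (metis scaleR_zero_left)
qed


lemma Q0_expand:
  fixes N :: mat3 and w :: vec3
  defines "c i \<equiv> N *v axis i 1"
  shows "Q0 (N *v w) = (w$1)^2 * Q0 (c 1) + (w$2)^2 * Q0 (c 2) + (w$3)^2 * Q0 (c 3)
     + w$1 * w$2 * (Q0 (c 1 + c 2) - Q0 (c 1) - Q0 (c 2))
     + w$1 * w$3 * (Q0 (c 1 + c 3) - Q0 (c 1) - Q0 (c 3))
     + w$2 * w$3 * (Q0 (c 2 + c 3) - Q0 (c 2) - Q0 (c 3))"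
  unfolding c_def Q0_def
  by (simp add: matrix_vector_mult_def sum_3 axis_def power2_eq_square algebra_simps)

lemma Q0_scale: "Q0 (k *\<^sub>R v) = k^2 * Q0 v"
  unfolding Q0_def by (simp add: power2_eq_square algebra_simps)

lemma good_exists:
  assumes N: "det N \<noteq> 0" and eta: "0 < \<eta>" "\<eta> < 1" and M: "M \<ge> 0"
  shows "\<exists>v\<in>lat N. v \<notin> Hset \<eta> M \<and> v \<noteq> 0"
proof -
  have "\<exists>v\<in>lat N. Q0 v \<noteq> 0"
  proof (rule ccontr)
    assume "\<not> ?thesis"
    then have all0: "Q0 v = 0" if "v \<in> lat N" for v using that by auto
    define c where "c i = N *v axis i 1" for i
    have cl: "c i \<in> lat N" for i unfolding c_def lat_def using axis_int by auto
    have csum: "c i + c j \<in> lat N" for i j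
    proof -
      have "axis i 1 + axis j 1 \<in> int_vecs" using axis_int unfolding int_vecs_def by auto
      moreover have "c i + c j = N *v (axis i 1 + axis j 1)" unfolding c_def by (simp add: matrix_vector_right_distrib)
      ultimately show ?thesis unfolding lat_def by auto
    qed
    define w where "w = matrix_inv N *v axis 2 1"
    have "N *v w = axis 2 1" unfolding w_def using inv_ok[OF N] by (simp add: matrix_vector_mul_assoc)
    then have "Q0 (N *v w) = 1" by (simp add: Q0_def axis_def)
    moreover have "Q0 (N *v w) = 0"
    proof -
      have z1: "Q0 (N *v axis i 1) = 0" for i using all0[OF cl] unfolding c_def by simp
      have z2: "Q0 (N *v axis i 1 + N *v axis j 1) = 0" for i j using all0[OF csum] unfolding c_def by simp
      show ?thesis using Q0_expand[of N w] by (simp only: z1 z2) simp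
    qed
    ultimately show False by simp
  qed
  then obtain v where v: "v \<in> lat N" "Q0 v \<noteq> 0" by auto
  then obtain z where z: "z \<in> int_vecs" "v = N *v z" unfolding lat_def by auto
  have v0: "v \<noteq> 0" using v(2) by (auto simp: Q0_def)
  then have nv: "infnorm v > 0" by (simp add: infnorm_pos_lt)
  obtain k :: nat where k: "real k > 1 / \<bar>Q0 v\<bar> + 1 / infnorm v + 1"
    using reals_Archimedean2 by blast
  have kq: "real k * \<bar>Q0 v\<bar> \<ge> 1"
  proof -
    have "real k > 1 / \<bar>Q0 v\<bar>" using k nv by (smt (verit) divide_pos_pos)
    then show ?thesis using v(2) by (simp add: field_simps)
  qed
  have kv: "real k * infnorm v \<ge> 1"
  proof -
    have "real k > 1 / infnorm v" using k v(2) by (smt (verit) abs_ge_zero divide_nonneg_nonneg)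
    then show ?thesis using nv by (simp add: field_simps)
  qed
  have k1: "real k \<ge> 1" using k v(2) nv by (smt (verit) abs_ge_zero divide_nonneg_nonneg)
  define v' where "v' = real k *\<^sub>R v"
  have "v' \<in> lat N"
  proof -
    have "real k *\<^sub>R z \<in> int_vecs" using z(1) unfolding int_vecs_def by auto
    moreover have "v' = N *v (real k *\<^sub>R z)" unfolding v'_def z(2) by (simp add: matrix_vector_mult_scaleR)
    ultimately show ?thesis unfolding lat_def by auto
  qed
  moreover have "v' \<noteq> 0" unfolding v'_def using v0 k1 by simp
  moreover have "v' \<notin> Hset \<eta> M"
  proof -
    have i: "infnorm v' = real k * infnorm v" unfolding v'_def by (simp add: infnorm_mul)
    have ge: "1 \<le> infnorm v' powr (50 * M)"
      unfolding i using kv M by (intro ge_one_powr_ge_zero) auto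
    have "infnorm v' powr (- 50 * M) = 1 / infnorm v' powr (50 * M)"
      using powr_minus_divide[of "infnorm v'" "50 * M"] by simp
    also have "\<dots> \<le> 1" using ge by (simp add: divide_le_eq_1)
    finally have pw: "infnorm v' powr (- 50 * M) \<le> 1" .
    have "\<bar>Q0 v'\<bar> = real k * (real k * \<bar>Q0 v\<bar>)" unfolding v'_def Q0_scale
      by (simp add: abs_mult power2_eq_square)
    also have "\<dots> \<ge> 1" using kq k1 mult_mono[of 1 "real k" 1 "real k * \<bar>Q0 v\<bar>"] by simp
    finally have "\<bar>Q0 v'\<bar> \<ge> 1" .
    moreover have "\<eta> * infnorm v' powr (- 50 * M) \<le> \<eta>" using pw eta by (simp add: mult_left_le_one_le)
    ultimately show ?thesis unfolding Hset_def mem_Collect_eq using eta by linarith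
  qed
  ultimately show ?thesis by blast
qed


lemma det_h: "det (a_mat t ** u_mat r) = 1"
  unfolding det_mul by (simp add: det_3 a_mat_def u_mat_def exp_minus)

lemma crude:
  assumes r: "\<bar>r\<bar> \<le> 1" and t: "t \<ge> 0"
  shows "infnorm x \<le> 3 * exp t * infnorm ((a_mat t ** u_mat r) *v x)"
proof -
  define z where "z = (a_mat t ** u_mat r) *v x"
  define n where "n = infnorm z"
  define E where "E = exp t"
  have E: "E \<ge> 1" unfolding E_def using t by simp
  have zc: "z$1 = E * (x$1 + r*x$2 + r^2/2*x$3)" "z$2 = x$2 + r*x$3" "z$3 = x$3 / E"
    unfolding z_def E_def h_apply by (simp_all add: exp_minus field_simps)
  have zb: "\<bar>z$i\<bar> \<le> n" for i unfolding n_def by (rule component_le_infnorm_cart)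
  have n0: "n \<ge> 0" unfolding n_def by (simp add: infnorm_pos_le)
  have x3: "x$3 = E * z$3" using zc(3) E by simp
  have x2: "x$2 = z$2 - r * E * z$3" using zc(2) x3 by simp
  have x1: "x$1 = z$1 / E - r * z$2 + r^2/2 * E * z$3"
    using zc(1) x2 x3 E by (simp add: field_simps power2_eq_square)
  have b3: "\<bar>x$3\<bar> \<le> E * n" unfolding x3 abs_mult using E zb[of 3] by (simp add: mult_left_mono)
  have rEz: "\<bar>r * E * z$3\<bar> \<le> E * n"
  proof -
    have "\<bar>r * E * z$3\<bar> = \<bar>r\<bar> * (E * \<bar>z$3\<bar>)" using E by (simp add: abs_mult)
    also have "\<dots> \<le> 1 * (E * n)" using r E zb[of 3] by (intro mult_mono mult_left_mono) auto
    finally show ?thesis by simp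
  qed
  have En: "n \<le> E * n" using E n0 mult_right_mono[of 1 E n] by simp
  have b2: "\<bar>x$2\<bar> \<le> 3 * E * n" unfolding x2 using zb[of 2] rEz En n0
      abs_triangle_ineq4[of "z$2" "r * E * z$3"] by linarith
  have t1: "\<bar>z$1 / E\<bar> \<le> n"
  proof -
    have "\<bar>z$1 / E\<bar> = \<bar>z$1\<bar> / E" using E by simp
    also have "\<dots> \<le> \<bar>z$1\<bar>" using E by (simp add: divide_le_eq mult_le_cancel_left1)
    finally show ?thesis using zb[of 1] by linarith
  qed
  have t2: "\<bar>r * z$2\<bar> \<le> n"
  proof -
    have "\<bar>r * z$2\<bar> = \<bar>r\<bar> * \<bar>z$2\<bar>" by (simp add: abs_mult)
    also have "\<dots> \<le> 1 * n" using r zb[of 2] by (intro mult_mono) auto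
    finally show ?thesis by simp
  qed
  have t3: "\<bar>r^2/2 * E * z$3\<bar> \<le> E * n"
  proof -
    have "\<bar>r^2/2 * E * z$3\<bar> = (r^2/2) * (E * \<bar>z$3\<bar>)" using E by (simp add: abs_mult)
    also have "\<dots> \<le> 1 * (E * n)" using r E zb[of 3] abs_square_le_1[of r]
      by (intro mult_mono mult_left_mono) auto
    finally show ?thesis by simp
  qed
  have b1: "\<bar>x$1\<bar> \<le> 3 * E * n" unfolding x1 using t1 t2 t3 En n0
      abs_triangle_ineq4[of "z$1 / E" "r * z$2"] abs_triangle_ineq[of "z$1 / E - r * z$2" "r^2/2 * E * z$3"]
    by linarith
  show ?thesis unfolding z_def[symmetric] n_def[symmetric] E_def[symmetric]
  proof (intro infnorm_le3)
    fix i :: 3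
    have "0 \<le> E * n" using E n0 by simp
    then have "\<forall>i::3. \<bar>x$i\<bar> \<le> 3 * E * n" unfolding forall_3 using b1 b2 b3 by linarith
    then show "\<bar>x$i\<bar> \<le> 3 * E * n" by blast
  qed
qed


definition Sflip :: "vec3 \<Rightarrow> vec3" where "Sflip y = vector [-(y$3), y$2, -(y$1)]"

lemma dual_h_apply:
  "dualmat (a_mat t ** u_mat r) *v y = vector [exp (-t) * y$1, y$2 - r * y$1, exp t * (r^2/2 * y$1 - r * y$2 + y$3)]"
proof -
  define Hd :: mat3 where "Hd = vector [vector [exp (-t), 0, 0], vector [-r, 1, 0], vector [exp t * r^2/2, - exp t * r, exp t]]"
  have "transpose (a_mat t ** u_mat r) ** Hd = mat 1"
    unfolding Hd_def
    by (simp add: vec_eq_iff forall_3 vector_def matrix_matrix_mult_def transpose_def sum_3 a_mat_def u_mat_def mat_def exp_minus field_simps power2_eq_square)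
  then have "dualmat (a_mat t ** u_mat r) = Hd"
    unfolding dualmat_def using det_h by (intro inv_unique) auto
  then show ?thesis unfolding Hd_def
    by (simp add: vec_eq_iff forall_3 vector_def matrix_vector_mult_def sum_3 algebra_simps)
qed

lemma infnorm_dual_h: "infnorm (dualmat (a_mat t ** u_mat r) *v y) = infnorm ((a_mat t ** u_mat r) *v Sflip y)"
proof -
  have e1: "\<bar>exp t * (r^2/2 * y$1 - r * y$2 + y$3)\<bar> = \<bar>exp t * (- y$3 + r * y$2 + r^2/2 * (- y$1))\<bar>"
    by (simp add: abs_mult algebra_simps abs_minus_commute)
  have e2: "\<bar>y$2 - r * y$1\<bar> = \<bar>y$2 + r * (- y$1)\<bar>" by simp
  have e3: "\<bar>exp (-t) * y$1\<bar> = \<bar>exp (-t) * (- y$1)\<bar>" by (simp add: abs_mult)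
  show ?thesis unfolding dual_h_apply h_apply infnorm3 Sflip_def
    using e1 e2 e3 by (simp add: max.assoc max.commute max.left_commute)
qed

lemma infnorm_Sflip: "infnorm (Sflip y) = infnorm y"
  unfolding Sflip_def infnorm3 by (simp add: max.commute max.left_commute)

lemma Sflip_zero: "Sflip y = 0 \<longleftrightarrow> y = 0"
  unfolding Sflip_def by (auto simp: vec_eq_iff forall_3 vector_def)

lemma dualmat_mult:
  assumes "det A \<noteq> 0" "det B \<noteq> 0"
  shows "dualmat (A ** B) = dualmat A ** dualmat (B::mat3)"
proof -
  have dA: "det (transpose A) \<noteq> 0" and dB: "det (transpose B) \<noteq> 0" using assms by auto
  have "transpose (A ** B) ** (dualmat A ** dualmat B) = transpose B ** (transpose A ** dualmat A) ** dualmat B"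
    by (simp add: matrix_transpose_mul matrix_mul_assoc)
  also have "\<dots> = mat 1" unfolding dualmat_def using inv_ok[OF dA] inv_ok[OF dB]
    by (simp add: matrix_mul_rid)
  finally show ?thesis unfolding dualmat_def[of "A ** B"] using assms
    by (intro inv_unique) (auto simp: det_mul)
qed

lemma act_lat: "act g (lat A) = lat (g ** A)"
  unfolding act_def lat_def by (auto simp: matrix_vector_mul_assoc image_image)


lemma exp_nat_bound: "exp (real n) = exp 1 ^ n"
  using exp_of_nat_mult[of n 1] by simp

lemma num_bound:
  fixes A B d t :: real
  assumes A: "A > 0" and B: "B > 0" and d: "0 < d" "d < 0.01" and t: "t > 0"
  shows "2 * (3 * exp t * min A (sqrt (2*B))) powr (1+d)
    \<le> 30 / d * exp (d*t) * A powr (1+d) + 80 / d * B powr 0.9 + 1/2 * exp (6*t)"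
proof -
  define p where "p = 1 + d"
  have p: "1 \<le> p" "p \<le> 27/25" using d unfolding p_def by auto
  define K where "K = 3 * exp t"
  define mm where "mm = min A (sqrt (2*B))"
  have K: "K > 0" unfolding K_def by simp
  have mm: "mm > 0" unfolding mm_def using A B by simp
  have nn1: "0 \<le> 30 / d * exp (d*t) * A powr p" using d by simp
  have nn2: "0 \<le> 80 / d * B powr 0.9" using d by simp
  have nn3: "0 \<le> 1/2 * exp (6*t)" by simp
  have "2 * (K * mm) powr p \<le> 30 / d * exp (d*t) * A powr p + 80 / d * B powr 0.9 + 1/2 * exp (6*t)"
  proof (cases "t \<le> 4")
    case True
    have "(K * mm) powr p \<le> (K * A) powr p"
      using K mm p unfolding mm_def by (intro powr_mono2 mult_left_mono) auto
    also have "\<dots> = 3 powr p * exp t * exp (d*t) * A powr p"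
      unfolding K_def p_def using A by (simp add: powr_mult exp_powr_real distrib_left exp_add algebra_simps)
    also have "\<dots> \<le> 9 * 81 * exp (d*t) * A powr p"
    proof -
      have "3 powr p \<le> 3 powr (2::real)" using p by (intro powr_mono) auto
      then have a: "3 powr p \<le> 9" by simp
      have "exp t \<le> exp 4" using True by simp
      also have "exp (4::real) = exp 1 ^ 4" using exp_nat_bound[of 4] by simp
      also have "\<dots> \<le> 3 ^ 4" using exp_le by (intro power_mono) auto
      finally have b: "exp t \<le> 81" by simp
      have "3 powr p * exp t \<le> 9 * 81" using a b by (intro mult_mono) auto
      then show ?thesis using A by (intro mult_right_mono) auto
    qed
    finally have c: "2 * (K * mm) powr p \<le> 1458 * (exp (d*t) * A powr p)" by (simp add: mult.assoc mult.commute)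
    have "1458 \<le> 30 / d" using d by (simp add: field_simps)
    then have "1458 * (exp (d*t) * A powr p) \<le> 30 / d * (exp (d*t) * A powr p)"
      by (intro mult_right_mono) auto
    then have "2 * (K * mm) powr p \<le> 30 / d * (exp (d*t) * A powr p)" using c by linarith
    then have "2 * (K * mm) powr p \<le> 30 / d * exp (d*t) * A powr p" by (simp only: mult.assoc)
    then show ?thesis using nn2 nn3 by linarith
  next
    case False
    then have t4: "t > 4" by simp
    define Y where "Y = K * sqrt (2*B)"
    have Y0: "Y > 0" unfolding Y_def using K B by simp
    have "mm \<le> sqrt (2*B)" unfolding mm_def by simp
    then have "K * mm \<le> Y" unfolding Y_def using K by (intro mult_left_mono) auto
    then have "(K * mm) powr p \<le> Y powr p"
      using K mm p by (intro powr_mono2) auto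
    moreover have "2 * Y powr p \<le> 30 / d * exp (d*t) * A powr p + 80 / d * B powr 0.9 + 1/2 * exp (6*t)"
    proof (cases "Y \<le> 1")
      case True
      then have "Y powr p \<le> 1" using Y0 p by (intro powr_le1) auto
      moreover have "4 \<le> exp (6*t)" using exp_ge_add_one_self[of "6*t"] t4 by linarith
      ultimately show ?thesis using nn1 nn2 by linarith
    next
      case False
      then have Y1: "Y \<ge> 1" by simp
      show ?thesis
      proof (cases "B \<le> exp (3*t)")
        case True
        have sq: "sqrt (exp (3*t)) = exp (3*t/2)"
          by (rule real_sqrt_unique) (simp_all add: power2_eq_square exp_add[symmetric])
        have s2: "sqrt 2 \<le> 5/3"
          by (rule real_le_lsqrt) (auto simp: power2_eq_square)
        have "Y = 3 * exp t * sqrt (2*B)" unfolding Y_def K_def ..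
        also have "\<dots> \<le> 3 * exp t * (sqrt 2 * exp (3*t/2))"
        proof -
          have "sqrt (2*B) \<le> sqrt (2 * exp (3*t))" using True by simp
          also have "\<dots> = sqrt 2 * exp (3*t/2)" using sq by (simp add: real_sqrt_mult)
          finally show ?thesis by simp
        qed
        also have "\<dots> = 3 * sqrt 2 * exp (5*t/2)" by (simp add: exp_add[symmetric] algebra_simps)
        also have "\<dots> \<le> 5 * exp (5*t/2)" using s2 by simp
        finally have Yb: "Y \<le> 5 * exp (5*t/2)" .
        have "Y powr p \<le> Y powr (3/2)" using Y1 p by (intro powr_mono) auto
        also have "\<dots> \<le> (5 * exp (5*t/2)) powr (3/2)" using Yb Y0 by (intro powr_mono2) auto
        also have "\<dots> = 5 powr (3/2) * exp (15*t/4)" by (simp add: powr_mult exp_powr_real)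
        also have "\<dots> \<le> 12 * exp (15*t/4)"
        proof -
          have "5 powr (3/2::real) = 5 * 5 powr (1/2::real)"
            using powr_add[of "5::real" 1 "1/2"] by simp
          also have "\<dots> = 5 * sqrt 5" by (simp add: powr_half_sqrt)
          also have "\<dots> \<le> 12"
          proof -
            have "sqrt 5 \<le> 12/5" by (rule real_le_lsqrt) (auto simp: power2_eq_square)
            then show ?thesis by simp
          qed
          finally show ?thesis by simp
        qed
        finally have Yp: "Y powr p \<le> 12 * exp (15*t/4)" .
        have "exp (9::real) = exp 1 ^ 9" using exp_nat_bound[of 9] by simp
        moreover have "(2::real) ^ 9 \<le> exp 1 ^ 9"
          using exp_ge_add_one_self[of 1] by (intro power_mono) auto
        ultimately have "512 \<le> exp (9::real)" by simp
        moreover have "exp (9::real) \<le> exp (9*t/4)" using t4 by simp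
        ultimately have e9: "48 \<le> exp (9*t/4)" by linarith
        have "exp (6*t) = exp (15*t/4) * exp (9*t/4)" by (simp add: exp_add[symmetric])
        then have "48 * exp (15*t/4) \<le> exp (6*t)" using e9 by (simp add: mult_right_mono mult.commute)
        then show ?thesis using Yp nn1 nn2 by linarith
      next
        case False
        have e3: "exp t \<le> B powr (1/3)"
        proof -
          have "exp t = exp (3*t) powr (1/3)" by (simp add: exp_powr_real)
          also have "\<dots> \<le> B powr (1/3)" using False by (intro powr_mono2) auto
          finally show ?thesis .
        qed
        have "Y = 3 * sqrt 2 * (exp t * B powr (1/2))" unfolding Y_def K_def
          using B by (simp add: real_sqrt_mult powr_half_sqrt)
        also have "\<dots> \<le> 3 * sqrt 2 * (B powr (1/3) * B powr (1/2))"
          using e3 by (intro mult_left_mono mult_right_mono) auto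
        also have "\<dots> = 3 * sqrt 2 * B powr (5/6)" by (simp add: powr_add[symmetric])
        finally have Yb: "Y \<le> 3 * sqrt 2 * B powr (5/6)" .
        have c1: "1 \<le> 3 * sqrt (2::real)"
        proof -
          have "1 \<le> sqrt (2::real)" by simp
          then show ?thesis by linarith
        qed
        have "Y powr p \<le> Y powr (27/25)" using Y1 p by (intro powr_mono) auto
        also have "\<dots> \<le> (3 * sqrt 2 * B powr (5/6)) powr (27/25)" using Yb Y0 by (intro powr_mono2) auto
        also have "\<dots> = (3 * sqrt 2) powr (27/25) * B powr (9/10)"
          using B by (simp add: powr_mult powr_powr)
        also have "\<dots> \<le> 18 * B powr (9/10)"
        proof -
          have "(3 * sqrt 2) powr (27/25) \<le> (3 * sqrt (2::real)) powr (2::real)"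
            using c1 by (intro powr_mono) auto
          also have "\<dots> = 18" by (simp add: power2_eq_square)
          finally show ?thesis by (intro mult_right_mono) auto
        qed
        finally have Yp: "Y powr p \<le> 18 * B powr (9/10)" .
        have "36 \<le> 80 / d" using d by (simp add: field_simps)
        then have "36 * B powr (9/10) \<le> 80 / d * B powr (9/10)" by (intro mult_right_mono) auto
        then show ?thesis using Yp nn1 nn3 by linarith
      qed
    qed
    ultimately show ?thesis by simp
  qed
  then show ?thesis unfolding p_def K_def mm_def by simp
qed


lemma max3_powr:
  fixes a b c p :: real
  assumes "0 \<le> a" "0 \<le> b" "0 \<le> c" "0 \<le> p"
  shows "max a (max b c) powr p \<le> a powr p + b powr p + c powr p"
  using assms by (auto simp: max_def)

lemma Sflip_scale: "Sflip (l *\<^sub>R y) = l *\<^sub>R Sflip y"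
  unfolding Sflip_def by (simp add: vec_eq_iff forall_3 vector_def)

theorem lemma3p5:
  fixes \<eta> M \<delta> t :: real and g :: mat3 and \<Delta> :: "vec3 set"
  assumes "0 < \<eta>" "\<eta> < 1" "M > 1" "0 < \<delta>" "\<delta> < 0.01"
    and "g \<in> Hgrp" "unimod_lattice \<Delta>" "t > 0"
  shows "(\<integral>\<^sup>+ r \<in> {-1..1}. ennreal (alpha_hat \<eta> M (a_mat t ** u_mat r ** g) \<Delta> powr (1 + \<delta>)) \<partial>lborel)
    \<le> ennreal (80 / \<delta> * exp (\<delta> * t) * alpha_hat \<eta> M g \<Delta> powr (1 + \<delta>)
               + 80 / \<delta> * alpha (act g \<Delta>) powr 0.9 + 1/2 * exp (6 * t))"
proof -
  note eta = assms(1,2) and Mg = assms(3) and d = assms(4,5) and t = assms(8)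
  obtain A0 where A0: "det A0 = 1" "\<Delta> = lat A0"
    using assms(7) unfolding unimod_lattice_def SL3_def lat_def by auto
  have dg: "det g = 1" using assms(6) unfolding Hgrp_def SL3_def by auto
  define N where "N = g ** A0"
  have dN: "det N = 1" unfolding N_def using dg A0 by (simp add: det_mul)
  have Lam: "act g \<Delta> = lat N" unfolding N_def A0 act_lat ..
  define h where "h r = a_mat t ** u_mat r" for r
  define p where "p = 1 + \<delta>"
  define D1 where "D1 = \<Delta> - (Hset \<eta> M \<union> {0})"
  define D2 where "D2 = dual_lattice \<Delta> - (Hset \<eta> M \<union> {0})"
  obtain v0 where v0: "v0 \<in> D1"
    using good_exists[of A0 \<eta> M] A0 eta Mg unfolding D1_def by auto
  obtain w0 where w0: "w0 \<in> D2"
  proof -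
    define A0' where "A0' = dualmat A0"
    have dA0': "det A0' \<noteq> 0"
    proof
      assume "det A0' = 0"
      have "transpose A0 ** A0' = mat 1" unfolding A0'_def dualmat_def using inv_ok[of "transpose A0"] A0 by simp
      then have "det (transpose A0) * det A0' = 1" by (metis det_I det_mul)
      then show False using \<open>det A0' = 0\<close> by simp
    qed
    have sub: "lat A0' \<subseteq> dual_lattice \<Delta>"
    proof
      fix w assume "w \<in> lat A0'"
      then obtain m where m: "m \<in> int_vecs" "w = A0' *v m" unfolding lat_def by auto
      show "w \<in> dual_lattice \<Delta>" unfolding dual_lattice_def A0(2)
      proof safe
        fix v assume "v \<in> lat A0"
        then obtain z where z: "z \<in> int_vecs" "v = A0 *v z" unfolding lat_def by auto
        have "inner w v = inner m z" unfolding m z A0'_def using inner_dualmat[of A0] A0 by simp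
        then show "inner w v \<in> \<int>" using Ints_inner m z by simp
      qed
    qed
    obtain w where "w \<in> lat A0'" "w \<notin> Hset \<eta> M" "w \<noteq> 0"
      using good_exists[OF dA0' eta(1) eta(2), of M] Mg by force
    then show ?thesis using that sub unfolding D2_def by auto
  qed
  have dtg: "det (transpose g) \<noteq> 0" using dg by simp
  have gx: "g *v v \<in> lat N \<and> g *v v \<noteq> 0" if vD: "v \<in> D1" for v
  proof
    obtain z where z: "z \<in> int_vecs" "v = A0 *v z" using vD unfolding D1_def A0(2) lat_def by auto
    show "g *v v \<in> lat N" unfolding N_def lat_def z by (simp add: matrix_vector_mul_assoc z(1))
    have "matrix_inv g *v (g *v v) = v" using inv_ok[of g] dg by (simp add: matrix_vector_mul_assoc)
    then show "g *v v \<noteq> 0" using vD unfolding D1_def by auto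
  qed
  have gy: "dualmat g *v w \<in> dual_lattice (lat N) \<and> dualmat g *v w \<noteq> 0" if wD: "w \<in> D2" for w
  proof
    show "dualmat g *v w \<in> dual_lattice (lat N)" unfolding dual_lattice_def
    proof safe
      fix x assume "x \<in> lat N"
      then obtain z where z: "z \<in> int_vecs" "x = g *v (A0 *v z)" unfolding lat_def N_def
        by (auto simp: matrix_vector_mul_assoc)
      have "A0 *v z \<in> \<Delta>" unfolding A0(2) lat_def using z by auto
      then have "inner w (A0 *v z) \<in> \<int>" using wD unfolding D2_def dual_lattice_def by auto
      then show "inner (dualmat g *v w) x \<in> \<int>" unfolding z using inner_dualmat[of g] dg by simp
    qed
    have "transpose g *v (dualmat g *v w) = w" unfolding dualmat_def using inv_ok[OF dtg]
      by (simp add: matrix_vector_mul_assoc del: transpose_matrix_vector)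
    then show "dualmat g *v w \<noteq> 0" using wD unfolding D2_def by auto
  qed
  obtain c1 where c1: "c1 > 0" "\<And>x. x \<in> lat N \<Longrightarrow> x \<noteq> 0 \<Longrightarrow> infnorm x \<ge> c1"
    using lat_lower[of N] dN by auto
  obtain c2 where c2: "c2 > 0" "\<And>x. x \<in> dual_lattice (lat N) \<Longrightarrow> x \<noteq> 0 \<Longrightarrow> infnorm x \<ge> c2"
    using dual_lower[of N] dN by auto
  have inv_le: "1 / infnorm x \<le> 1 / c" if "c > 0" "infnorm x \<ge> c" for x c
    using that by (simp add: frac_le)
  have up1: "1 / infnorm (g *v v) \<le> alpha_hat1 \<eta> M g \<Delta>" if "v \<in> D1" for v
    unfolding alpha_hat1_def
  proof (rule cSup_upper)
    show "1 / infnorm (g *v v) \<in> {1 / infnorm (g *v v) |v. v \<in> \<Delta> - (Hset \<eta> M \<union> {0})}"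
      using that unfolding D1_def by auto
    show "bdd_above {1 / infnorm (g *v v) |v. v \<in> \<Delta> - (Hset \<eta> M \<union> {0})}"
      unfolding bdd_above_def using gx c1 inv_le unfolding D1_def by blast
  qed
  have up2: "1 / infnorm (dualmat g *v w) \<le> alpha_hat2 \<eta> M g \<Delta>" if "w \<in> D2" for w
    unfolding alpha_hat2_def alpha_hat1_def
  proof (rule cSup_upper)
    show "1 / infnorm (dualmat g *v w) \<in> {1 / infnorm (dualmat g *v v) |v. v \<in> dual_lattice \<Delta> - (Hset \<eta> M \<union> {0})}"
      using that unfolding D2_def by auto
    show "bdd_above {1 / infnorm (dualmat g *v v) |v. v \<in> dual_lattice \<Delta> - (Hset \<eta> M \<union> {0})}"
      unfolding bdd_above_def using gy c2 inv_le unfolding D2_def by blast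
  qed
  define A where "A = alpha_hat \<eta> M g \<Delta>"
  have upA1: "1 / infnorm (g *v v) \<le> A" if "v \<in> D1" for v
    using up1[OF that] unfolding A_def alpha_hat_def by simp
  have upA2: "1 / infnorm (dualmat g *v w) \<le> A" if "w \<in> D2" for w
    using up2[OF that] unfolding A_def alpha_hat_def by simp
  have Apos: "A > 0"
  proof -
    have "infnorm (g *v v0) > 0" using gx[OF v0] by (simp add: infnorm_pos_lt)
    then have "0 < 1 / infnorm (g *v v0)" by simp
    then show ?thesis using upA1[OF v0] by linarith
  qed
  define B where "B = alpha (act g \<Delta>)"
  have upB: "1 / infnorm x \<le> B" if "x \<in> lat N \<union> dual_lattice (lat N)" "x \<noteq> 0" for x
    unfolding B_def alpha_def Lam
  proof (rule cSup_upper)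
    show "1 / infnorm x \<in> {1 / infnorm v |v. v \<in> lat N \<union> dual_lattice (lat N) - {0}}"
      using that by auto
    have "1 / infnorm v \<le> 1 / min c1 c2" if "v \<in> lat N \<union> dual_lattice (lat N) - {0}" for v
      using that c1 c2 by (intro inv_le) (auto simp: min_le_iff_disj)
    then show "bdd_above {1 / infnorm v |v. v \<in> lat N \<union> dual_lattice (lat N) - {0}}"
      unfolding bdd_above_def by blast
  qed
  have Bpos: "B > 0"
  proof -
    have "infnorm (g *v v0) > 0" using gx[OF v0] by (simp add: infnorm_pos_lt)
    then have "0 < 1 / infnorm (g *v v0)" by simp
    moreover have "1 / infnorm (g *v v0) \<le> B" using upB[of "g *v v0"] gx[OF v0] by blast
    ultimately show ?thesis by linarith
  qed
  define sh where "sh x \<longleftrightarrow> 2 * B * (infnorm x)^2 < 1" for x :: vec3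
  have key: "cross3 x y = 0" if "cross3 x y \<in> lat N \<union> dual_lattice (lat N)" "sh x" "sh y" for x y
  proof (rule ccontr)
    assume c0: "cross3 x y \<noteq> 0"
    have "1 / infnorm (cross3 x y) \<le> B" using upB[OF that(1) c0] .
    moreover have cp: "infnorm (cross3 x y) > 0" using c0 by (simp add: infnorm_pos_lt)
    ultimately have "1 \<le> B * infnorm (cross3 x y)" by (simp add: field_simps)
    also have "\<dots> \<le> B * (2 * infnorm x * infnorm y)" using Bpos cross_norm by (intro mult_left_mono) auto
    finally have one: "1 \<le> 2 * B * infnorm x * infnorm y" by simp
    have xa: "0 \<le> 2 * B * (infnorm x)^2" "0 \<le> 2 * B * (infnorm y)^2" using Bpos by auto
    have "(2 * B * (infnorm x)^2) * (2 * B * (infnorm y)^2) < 1 * 1"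
      using that(2,3) xa unfolding sh_def by (intro mult_strict_mono') auto
    then have "(2 * B * infnorm x * infnorm y)^2 < 1" by (simp add: power2_eq_square algebra_simps)
    moreover have "(2 * B * infnorm x * infnorm y)^2 \<ge> 1" using one by (simp add: one_le_power)
    ultimately show False by simp
  qed
  define u where "u = (if \<exists>x\<in>lat N. x \<noteq> 0 \<and> sh x then SOME x. x \<in> lat N \<and> x \<noteq> 0 \<and> sh x else axis 1 1)"
  have u0: "u \<noteq> 0"
  proof (cases "\<exists>x\<in>lat N. x \<noteq> 0 \<and> sh x")
    case True
    then have "u \<in> lat N \<and> u \<noteq> 0 \<and> sh u" unfolding u_def by (simp add: Bex_def) (rule someI_ex, auto)
    then show ?thesis by simp
  next
    case False
    then have "u = axis 1 1" unfolding u_def by (rule if_not_P)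
    then show ?thesis by simp
  qed
  have par1: "\<exists>l. x = l *\<^sub>R u" if "x \<in> lat N" "x \<noteq> 0" "sh x" for x
  proof -
    have ex: "\<exists>x\<in>lat N. x \<noteq> 0 \<and> sh x" using that by auto
    then have uu: "u \<in> lat N \<and> u \<noteq> 0 \<and> sh u" unfolding u_def by (simp add: Bex_def) (rule someI_ex, auto)
    have "cross3 x u \<in> dual_lattice (lat N)" using cross_dual[OF dN] that uu by auto
    then have "cross3 x u = 0" using key that uu by auto
    then show ?thesis using cross_zero_par uu by auto
  qed
  define us where "us = (if \<exists>x\<in>dual_lattice (lat N). x \<noteq> 0 \<and> sh x then SOME x. x \<in> dual_lattice (lat N) \<and> x \<noteq> 0 \<and> sh x else axis 1 1)"
  have us0: "us \<noteq> 0"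
  proof (cases "\<exists>x\<in>dual_lattice (lat N). x \<noteq> 0 \<and> sh x")
    case True
    then have "us \<in> dual_lattice (lat N) \<and> us \<noteq> 0 \<and> sh us" unfolding us_def by (simp add: Bex_def) (rule someI_ex, auto)
    then show ?thesis by simp
  next
    case False
    then have "us = axis 1 1" unfolding us_def by (rule if_not_P)
    then show ?thesis by simp
  qed
  have par2: "\<exists>l. x = l *\<^sub>R us" if "x \<in> dual_lattice (lat N)" "x \<noteq> 0" "sh x" for x
  proof -
    have ex: "\<exists>x\<in>dual_lattice (lat N). x \<noteq> 0 \<and> sh x" using that by auto
    then have uu: "us \<in> dual_lattice (lat N) \<and> us \<noteq> 0 \<and> sh us" unfolding us_def by (simp add: Bex_def) (rule someI_ex, auto)
    have "cross3 x us \<in> lat N" using cross_dual2[OF dN] that uu by auto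
    then have "cross3 x us = 0" using key that uu by auto
    then show ?thesis using cross_zero_par uu by auto
  qed
  define u2 where "u2 = Sflip us"
  have u20: "u2 \<noteq> 0" unfolding u2_def using us0 Sflip_zero by auto
  define K where "K = 3 * exp t"
  define mm where "mm = min A (sqrt (2*B))"
  have K0: "K > 0" unfolding K_def by simp
  have mm0: "mm > 0" unfolding mm_def using Apos Bpos by simp
  have gen: "1 / infnorm (h r *v z) \<le> max (A * (infnorm w / infnorm (h r *v w))) (K * mm)"
    if z0: "z \<noteq> 0" and w0: "w \<noteq> 0" and zA: "1 / infnorm z \<le> A" and r: "r \<in> {-1..1}"
      and zs: "sh z \<longrightarrow> (\<exists>l. z = l *\<^sub>R w)" for z w r
  proof -
    have nz: "infnorm z > 0" using z0 by (simp add: infnorm_pos_lt)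
    have cr: "infnorm z \<le> K * infnorm (h r *v z)" unfolding K_def h_def
      using crude[of r t z] r t by auto
    then have "0 < K * infnorm (h r *v z)" using nz by linarith
    then have hz: "infnorm (h r *v z) > 0" using K0 by (simp add: zero_less_mult_iff)
    show ?thesis
    proof (cases "sh z")
      case True
      then obtain l where l: "z = l *\<^sub>R w" using zs by auto
      have l0: "l \<noteq> 0" using l z0 by auto
      have hw: "h r *v z = l *\<^sub>R (h r *v w)" unfolding l by (simp add: matrix_vector_mult_scaleR)
      have nw: "infnorm w > 0" using w0 by (simp add: infnorm_pos_lt)
      have i1: "infnorm (h r *v z) = \<bar>l\<bar> * infnorm (h r *v w)" using hw by (simp add: infnorm_mul)
      have i2: "infnorm z = \<bar>l\<bar> * infnorm w" using l by (simp add: infnorm_mul)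
      have "1 / infnorm (h r *v z) = (1 / infnorm z) * (infnorm w / infnorm (h r *v w))"
        unfolding i1 i2 using l0 nw by (simp add: field_simps)
      also have "\<dots> \<le> A * (infnorm w / infnorm (h r *v w))"
        using zA by (intro mult_right_mono) (auto simp: infnorm_pos_le)
      finally show ?thesis by simp
    next
      case False
      then have "1 \<le> 2 * B * (infnorm z)^2" unfolding sh_def by simp
      then have "(1 / infnorm z)^2 \<le> 2 * B" using nz by (simp add: field_simps power2_eq_square)
      then have "1 / infnorm z \<le> sqrt (2 * B)" by (rule real_le_rsqrt)
      then have zm: "1 / infnorm z \<le> mm" unfolding mm_def using zA by simp
      have "1 / infnorm (h r *v z) \<le> K * (1 / infnorm z)"
        using cr nz hz by (simp add: field_simps)
      also have "\<dots> \<le> K * mm" using zm K0 by (intro mult_left_mono) auto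
      finally show ?thesis by simp
    qed
  qed
  define G where "G r = max (A * (infnorm u / infnorm (h r *v u)))
      (max (A * (infnorm u2 / infnorm (h r *v u2))) (K * mm))" for r
  have P1: "1 / infnorm ((h r ** g) *v v) \<le> G r" if "v \<in> D1" "r \<in> {-1..1}" for v r
  proof -
    have "1 / infnorm (h r *v (g *v v)) \<le> max (A * (infnorm u / infnorm (h r *v u))) (K * mm)"
      using gen[of "g *v v" u r] gx[OF that(1)] u0 upA1[OF that(1)] that(2) par1 by auto
    then show ?thesis unfolding G_def by (simp add: matrix_vector_mul_assoc[symmetric])
  qed
  have P2: "1 / infnorm (dualmat (h r ** g) *v w) \<le> G r" if "w \<in> D2" "r \<in> {-1..1}" for w r
  proof -
    define y where "y = dualmat g *v w"
    have y: "y \<in> dual_lattice (lat N)" "y \<noteq> 0" using gy[OF that(1)] unfolding y_def by auto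
    have yA: "1 / infnorm (Sflip y) \<le> A" using upA2[OF that(1)] unfolding y_def infnorm_Sflip .
    have zs: "sh (Sflip y) \<longrightarrow> (\<exists>l. Sflip y = l *\<^sub>R u2)"
    proof
      assume "sh (Sflip y)"
      then have "sh y" unfolding sh_def infnorm_Sflip .
      then obtain l where "y = l *\<^sub>R us" using par2 y by blast
      then show "\<exists>l. Sflip y = l *\<^sub>R u2" unfolding u2_def by (auto simp: Sflip_scale)
    qed
    have "1 / infnorm (h r *v Sflip y) \<le> max (A * (infnorm u2 / infnorm (h r *v u2))) (K * mm)"
      using gen[of "Sflip y" u2 r] y Sflip_zero u20 yA that(2) zs by auto
    moreover have "dualmat (h r ** g) *v w = dualmat (h r) *v y"
      unfolding y_def h_def using dualmat_mult[of "a_mat t ** u_mat r" g] det_h dg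
      by (simp add: matrix_vector_mul_assoc)
    moreover have "infnorm (dualmat (h r) *v y) = infnorm (h r *v Sflip y)"
      unfolding h_def by (rule infnorm_dual_h)
    ultimately show ?thesis unfolding G_def by simp
  qed
  define f where "f r = alpha_hat \<eta> M (h r ** g) \<Delta>" for r
  have fG: "f r \<le> G r" and f0: "0 \<le> f r" if r: "r \<in> {-1..1}" for r
  proof -
    have s1: "alpha_hat1 \<eta> M (h r ** g) \<Delta> \<le> G r"
      unfolding alpha_hat1_def
      by (rule cSup_least) (use v0 P1[OF _ r] in \<open>auto simp: D1_def\<close>)
    have s2: "alpha_hat2 \<eta> M (h r ** g) \<Delta> \<le> G r"
      unfolding alpha_hat2_def alpha_hat1_def
      by (rule cSup_least) (use w0 P2[OF _ r] in \<open>auto simp: D2_def\<close>)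
    show "f r \<le> G r" unfolding f_def alpha_hat_def using s1 s2 by simp
    have "1 / infnorm ((h r ** g) *v v0) \<le> alpha_hat1 \<eta> M (h r ** g) \<Delta>"
      unfolding alpha_hat1_def
    proof (rule cSup_upper)
      show "1 / infnorm ((h r ** g) *v v0) \<in> {1 / infnorm ((h r ** g) *v v) |v. v \<in> \<Delta> - (Hset \<eta> M \<union> {0})}"
        using v0 unfolding D1_def by auto
      show "bdd_above {1 / infnorm ((h r ** g) *v v) |v. v \<in> \<Delta> - (Hset \<eta> M \<union> {0})}"
        unfolding bdd_above_def using P1[OF _ r] unfolding D1_def by blast
    qed
    moreover have "0 \<le> 1 / infnorm ((h r ** g) *v v0)" by (simp add: infnorm_pos_le)
    ultimately have "0 \<le> alpha_hat1 \<eta> M (h r ** g) \<Delta>" by linarith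
    then show "0 \<le> f r" unfolding f_def alpha_hat_def by simp
  qed
  obtain \<psi>1 where \<psi>1: "\<psi>1 \<in> borel_measurable borel" "\<forall>r. 0 \<le> \<psi>1 r"
      "\<forall>r\<in>{-1..1}. (infnorm u / infnorm ((a_mat t ** u_mat r) *v u)) powr (1+\<delta>) \<le> \<psi>1 r"
      "(\<integral>\<^sup>+ r. ennreal (\<psi>1 r) * indicator {-1..1} r \<partial>lborel) \<le> ennreal (25 * exp (\<delta>*t) / \<delta>)"
    using sv_bound[OF u0 t d] by blast
  obtain \<psi>2 where \<psi>2: "\<psi>2 \<in> borel_measurable borel" "\<forall>r. 0 \<le> \<psi>2 r"
      "\<forall>r\<in>{-1..1}. (infnorm u2 / infnorm ((a_mat t ** u_mat r) *v u2)) powr (1+\<delta>) \<le> \<psi>2 r"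
      "(\<integral>\<^sup>+ r. ennreal (\<psi>2 r) * indicator {-1..1} r \<partial>lborel) \<le> ennreal (25 * exp (\<delta>*t) / \<delta>)"
    using sv_bound[OF u20 t d] by blast
  define Ap where "Ap = A powr p"
  define c where "c = (K * mm) powr p"
  have Ap0: "Ap \<ge> 0" and c0: "c \<ge> 0" unfolding Ap_def c_def by auto
  have pw: "f r powr p \<le> Ap * \<psi>1 r + Ap * \<psi>2 r + c" if r: "r \<in> {-1..1}" for r
  proof -
    have p0: "0 \<le> p" unfolding p_def using d by simp
    have "f r powr p \<le> G r powr p" using fG[OF r] f0[OF r] p0 by (intro powr_mono2) auto
    also have "\<dots> \<le> (A * (infnorm u / infnorm (h r *v u))) powr p
        + (A * (infnorm u2 / infnorm (h r *v u2))) powr p + (K * mm) powr p"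
      unfolding G_def using Apos K0 mm0 p0 by (intro max3_powr) (auto simp: infnorm_pos_le)
    also have "\<dots> = Ap * (infnorm u / infnorm (h r *v u)) powr p
        + Ap * (infnorm u2 / infnorm (h r *v u2)) powr p + c"
    proof -
      have e: "(A * x) powr p = Ap * x powr p" if "0 \<le> x" for x
        unfolding Ap_def using Apos that by (simp add: powr_mult)
      show ?thesis unfolding c_def by (simp only: e infnorm_pos_le divide_nonneg_nonneg)
    qed
    also have "\<dots> \<le> Ap * \<psi>1 r + Ap * \<psi>2 r + c"
      using \<psi>1(3) \<psi>2(3) r Ap0 unfolding h_def p_def
      by (intro add_mono mult_left_mono order_refl) auto
    finally show ?thesis .
  qed
  have meas1[measurable]: "\<psi>1 \<in> borel_measurable borel" by (rule \<psi>1(1))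
  have meas2[measurable]: "\<psi>2 \<in> borel_measurable borel" by (rule \<psi>2(1))
  have "(\<integral>\<^sup>+ r. ennreal (f r powr p) * indicator {-1..1} r \<partial>lborel)
      \<le> (\<integral>\<^sup>+ r. ennreal (Ap * \<psi>1 r + Ap * \<psi>2 r + c) * indicator {-1..1} r \<partial>lborel)"
    using pw by (intro nn_integral_mono) (auto intro: ennreal_leI split: split_indicator)
  also have "\<dots> = (\<integral>\<^sup>+ r. ennreal Ap * (ennreal (\<psi>1 r) * indicator {-1..1} r)
      + ennreal Ap * (ennreal (\<psi>2 r) * indicator {-1..1} r) + ennreal c * indicator {-1..1} r \<partial>lborel)"
    using Ap0 c0 \<psi>1(2) \<psi>2(2)
    by (intro nn_integral_cong) (auto simp: ennreal_plus ennreal_mult split: split_indicator)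
  also have "\<dots> = ennreal Ap * (\<integral>\<^sup>+ r. ennreal (\<psi>1 r) * indicator {-1..1} r \<partial>lborel)
      + ennreal Ap * (\<integral>\<^sup>+ r. ennreal (\<psi>2 r) * indicator {-1..1} r \<partial>lborel) + ennreal c * 2"
    by (simp add: nn_integral_add nn_integral_cmult)
  also have "\<dots> \<le> ennreal Ap * ennreal (25 * exp (\<delta>*t) / \<delta>)
      + ennreal Ap * ennreal (25 * exp (\<delta>*t) / \<delta>) + ennreal c * 2"
    using \<psi>1(4) \<psi>2(4) by (intro add_mono mult_left_mono order_refl) auto
  also have "\<dots> = ennreal (50 / \<delta> * exp (\<delta>*t) * Ap + 2 * c)"
  proof -
    define X where "X = 25 * exp (\<delta>*t) / \<delta>"
    have X0: "X \<ge> 0" unfolding X_def using d by simp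
    have m1: "ennreal Ap * ennreal X = ennreal (Ap * X)" using Ap0 X0 by (simp add: ennreal_mult)
    have m2: "ennreal c * 2 = ennreal (c * 2)" using c0 by (simp add: ennreal_mult)
    have "ennreal Ap * ennreal X + ennreal Ap * ennreal X + ennreal c * 2 = ennreal (Ap * X + Ap * X + c * 2)"
      unfolding m1 m2 using Ap0 X0 c0 by (simp only: ennreal_plus[symmetric] mult_nonneg_nonneg add_nonneg_nonneg)
    also have "Ap * X + Ap * X + c * 2 = 50 / \<delta> * exp (\<delta>*t) * Ap + 2 * c"
      unfolding X_def by (simp add: field_simps)
    finally show ?thesis unfolding X_def .
  qed
  also have "\<dots> \<le> ennreal (80 / \<delta> * exp (\<delta> * t) * A powr (1 + \<delta>)
               + 80 / \<delta> * B powr 0.9 + 1/2 * exp (6 * t))"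
  proof (rule ennreal_leI)
    have n2: "2 * c \<le> 30 / \<delta> * exp (\<delta>*t) * A powr (1+\<delta>) + 80 / \<delta> * B powr 0.9 + 1/2 * exp (6*t)"
      using num_bound[OF Apos Bpos d t] unfolding c_def K_def mm_def p_def .
    define V where "V = exp (\<delta>*t) * A powr (1+\<delta>) / \<delta>"
    have v1: "50 / \<delta> * exp (\<delta>*t) * Ap = 50 * V" unfolding V_def Ap_def p_def by simp
    have v2: "30 / \<delta> * exp (\<delta>*t) * A powr (1+\<delta>) = 30 * V" unfolding V_def by simp
    have v3: "80 / \<delta> * exp (\<delta>*t) * A powr (1+\<delta>) = 80 * V" unfolding V_def by simp
    show "50 / \<delta> * exp (\<delta>*t) * Ap + 2 * c \<le> 80 / \<delta> * exp (\<delta> * t) * A powr (1 + \<delta>)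
               + 80 / \<delta> * B powr 0.9 + 1/2 * exp (6 * t)" unfolding v1 v3 using n2 unfolding v2 by linarith
  qed
  finally show ?thesis unfolding f_def h_def p_def A_def B_def .
qed

end
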